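(* Consider stochastic momentum gradient descent on a 2-layer diagonal linear network as described in the context. Assume that the iterates $(u_k,v_k)$ converge to $(u_\infty,v_\infty)$, let $\theta^{\mathrm{SMGD}}=u_\infty\odot v_\infty$, assume that $\Delta_\infty=|u_\infty^2-v_\infty^2|$ has nonzero coordinates, and that no coordinate of $w_{\pm,k}$ is ever exactly zero. Then $\theta^{\mathrm{SMGD}}$ interpolates the dataset and $$\theta^{\mathrm{SMGD}}=\arg\min_{\theta^\star\in\mathcal{S}}D_{\psi_{\Delta_\infty}}(\theta^\star,\tilde\theta_0),$$ where $\Delta_\infty=\Delta_0\odot\exp\big(-(S_++S_-)\big)$ and $\tilde\theta_0=\frac14\big(w_{+,0}^2\odot\exp(-2S_+)-w_{-,0}^2\odot\exp(-2S_-)\big)$.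
   Context: Data $x_1,\dots,x_n\in\mathbb{R}^d$, $y\in\mathbb{R}^n$, interpolators $\mathcal{S}=\{\theta:\langle\theta,x_i\rangle=y_i\ \forall i\}$. For a batch $\mathcal B\subset[n]$ of size $B$, $L_{\mathcal B}(\theta)=\frac{1}{2B}\sum_{i\in\mathcal B}(y_i-\langle x_i,\theta\rangle)^2$. Vector operations are coordinate-wise. Stochastic momentum gradient descent with $\gamma>0$, $\beta\in[0,1)$ and batches $\mathcal B_k\subset[n]$ of size $B\in[n]$ sampled with or without replacement: $u_{k+1}=u_k-\gamma\nabla L_{\mathcal B_k}(\theta_k)\odot v_k+\beta(u_k-u_{k-1})$, $v_{k+1}=v_k-\gamma\nabla L_{\mathcal B_k}(\theta_k)\odot u_k+\beta(v_k-v_{k-1})$, $\theta_k=u_k\odot v_k$, with $u_1=u_0$, $v_1=v_0$. $w_{\pm,k}=u_k\pm v_k$, $\Delta_k=|u_k^2-v_k^2|$. $S_\pm=\frac{1}{1-\beta}\sum_{k=1}^\infty[r(w_{\pm,k+1}/w_{\pm,k})+\beta r(w_{\pm,k}/w_{\pm,k+1})]$ with $r(z)=(z-1)-\ln|z|$. Hyperbolic entropy: for $\Delta\in(0,\infty)^d$, $\psi_\Delta(\theta)=\frac14\sum_{i=1}^d\big(2\theta_i\mathrm{arcsinh}(2\theta_i/\Delta_i)-\sqrt{4\theta_i^2+\Delta_i^2}+\Delta_i\big)$; Bregman divergence $D_\Phi(\theta_1,\theta_2)=\Phi(\theta_1)-\Phi(\theta_2)-\langle\nabla\Phi(\theta_2),\theta_1-\theta_2\rangle$.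 *)

theory Defs
  imports "HOL-Analysis.Analysis"
begin

definition interpolators :: "nat \<Rightarrow> (nat \<Rightarrow> real^'d) \<Rightarrow> (nat \<Rightarrow> real) \<Rightarrow> (real^'d) set" where
  "interpolators n x y = {\<theta>. \<forall>i<n. inner \<theta> (x i) = y i}"

definition batch_loss :: "(nat \<Rightarrow> real^'d) \<Rightarrow> (nat \<Rightarrow> real) \<Rightarrow> nat set \<Rightarrow> real^'d \<Rightarrow> real" where
  "batch_loss x y Bs \<theta> = (1 / (2 * real (card Bs))) * (\<Sum>i\<in>Bs. (y i - inner (x i) \<theta>)^2)"

definition batch_grad :: "(nat \<Rightarrow> real^'d) \<Rightarrow> (nat \<Rightarrow> real) \<Rightarrow> nat set \<Rightarrow> real^'d \<Rightarrow> real^'d" where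
  "batch_grad x y Bs \<theta> = - ((1 / real (card Bs)) *\<^sub>R (\<Sum>i\<in>Bs. (y i - inner (x i) \<theta>) *\<^sub>R x i))"

definition hmul :: "real^'d \<Rightarrow> real^'d \<Rightarrow> real^'d" where
  "hmul a b = (\<chi> i. a$i * b$i)"

definition rfun :: "real \<Rightarrow> real" where
  "rfun z = (z - 1) - ln \<bar>z\<bar>"

definition S_term :: "real \<Rightarrow> (nat \<Rightarrow> real^'d) \<Rightarrow> 'd \<Rightarrow> nat \<Rightarrow> real" where
  "S_term \<beta> w i k = rfun (w (k+1) $ i / w k $ i) + \<beta> * rfun (w k $ i / w (k+1) $ i)"

definition S_sum :: "real \<Rightarrow> (nat \<Rightarrow> real^'d) \<Rightarrow> real^'d" where
  "S_sum \<beta> w = (\<chi> i. (1 / (1 - \<beta>)) * (\<Sum>k. S_term \<beta> w i (k+1)))"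

definition hyp_entropy :: "real^'d \<Rightarrow> real^'d \<Rightarrow> real" where
  "hyp_entropy \<Delta> \<theta> = (1/4) * (\<Sum>i\<in>UNIV.
      2 * \<theta>$i * arsinh (2 * \<theta>$i / \<Delta>$i) - sqrt (4 * (\<theta>$i)^2 + (\<Delta>$i)^2) + \<Delta>$i)"

text \<open>Bregman divergence D_Phi(a,b) = Phi a - Phi b - <grad Phi(b), a - b>, where the
  inner product with the gradient is the Frechet derivative at b applied to a - b.\<close>
definition bregman :: "('a::real_normed_vector \<Rightarrow> real) \<Rightarrow> 'a \<Rightarrow> 'a \<Rightarrow> real" where
  "bregman \<Phi> a b = \<Phi> a - \<Phi> b - frechet_derivative \<Phi> (at b) (a - b)"

end

theory Submission
  imports Defs
begin

lemma rfun_nonneg: "z > 0 \<Longrightarrow> rfun z \<ge> 0"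
  unfolding rfun_def using ln_le_minus_one[of z] by simp

lemma arsinh_ratio:
  fixes A B :: real assumes "A > 0" "B > 0"
  shows "arsinh ((A^2 - B^2) / (2*A*B)) = ln A - ln B"
proof -
  have "sinh (ln A - ln B) = (A^2 - B^2) / (2*A*B)"
    using assms by (simp add: sinh_def exp_diff exp_minus field_simps power2_eq_square)
  then show ?thesis by (metis arsinh_sinh_real)
qed

definition fD :: "real \<Rightarrow> real \<Rightarrow> real" where
  "fD D t = 2 * t * arsinh (2 * t / D) - sqrt (4 * t^2 + D^2) + D"

lemma fD_deriv:
  assumes D: "D > 0"
  shows "(fD D has_real_derivative 2 * arsinh (2 * t / D)) (at t)"
proof -
  have p: "4 * t^2 + D^2 > 0" using D by (simp add: add_nonneg_pos)
  have s: "sqrt ((2 * t / D)^2 + 1) = sqrt (4 * t^2 + D^2) / D"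
  proof -
    have "(2 * t / D)^2 + 1 = (4 * t^2 + D^2) / D^2" using D by (simp add: field_simps power2_eq_square)
    then show ?thesis using D by (simp add: real_sqrt_divide)
  qed
  have d1: "((\<lambda>x. arsinh (2*x/D)) has_real_derivative (1/sqrt((2*t/D)^2+1) * (2/D))) (at t)"
    apply (rule DERIV_chain2[OF arsinh_real_has_field_derivative])
    using D by (auto intro!: derivative_eq_intros)
  have d2: "((\<lambda>x. sqrt(4*x^2+D^2)) has_real_derivative (inverse (sqrt (4*t^2+D^2)) / 2 * (4*(2*t)))) (at t)"
    apply (rule DERIV_chain2[where f=sqrt and g="\<lambda>x. 4*x^2+D^2"])
    using p by (auto intro!: derivative_eq_intros DERIV_real_sqrt)
  have d3: "((\<lambda>x. 2*x) has_real_derivative 2) (at t)"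
    by (auto intro!: derivative_eq_intros)
  have "(fD D has_real_derivative
      (2 * arsinh (2 * t / D) + 2 * t * (1/sqrt((2*t/D)^2+1) * (2/D)))
      - (inverse (sqrt (4*t^2+D^2)) / 2 * (4*(2*t))) + 0) (at t)"
    unfolding fD_def [abs_def]
    by (intro DERIV_add DERIV_diff DERIV_const d2 DERIV_mult[OF d3 d1, THEN DERIV_cong]) (simp add: algebra_simps)
  moreover have "2 * t * (1 / sqrt ((2 * t / D)^2 + 1) * (2 / D))
      - (inverse (sqrt (4*t^2+D^2)) / 2 * (4*(2*t))) = 0"
    unfolding s using D p by (simp add: field_simps)
  ultimately show ?thesis by simp
qed

lemma arsinh_le_iff_real: "arsinh (x::real) \<le> arsinh y \<longleftrightarrow> x \<le> y"
  by (meson arsinh_less_iff_real not_le)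

lemma fD_convex:
  assumes D: "D > 0"
  shows "fD D s - fD D t \<ge> 2 * arsinh (2 * t / D) * (s - t)"
proof (cases "t < s")
  case True
  obtain z where z: "t < z" "z < s" "fD D s - fD D t = (s - t) * (2 * arsinh (2 * z / D))"
    using MVT2[OF True, of "fD D" "\<lambda>z. 2 * arsinh (2 * z / D)"] fD_deriv[OF D] by blast
  have "arsinh (2 * t / D) \<le> arsinh (2 * z / D)" using z D by (simp add: arsinh_le_iff_real divide_right_mono)
  then show ?thesis using z True by (simp add: mult_left_mono mult.commute)
next
  case False
  show ?thesis
  proof (cases "s < t")
    case True
    obtain z where z: "s < z" "z < t" "fD D t - fD D s = (t - s) * (2 * arsinh (2 * z / D))"
      using MVT2[OF True, of "fD D" "\<lambda>z. 2 * arsinh (2 * z / D)"] fD_deriv[OF D] by blast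
    have "arsinh (2 * z / D) \<le> arsinh (2 * t / D)" using z D by (simp add: arsinh_le_iff_real divide_right_mono)
    then have "(t - s) * (2 * arsinh (2 * z / D)) \<le> (t - s) * (2 * arsinh (2 * t / D))"
      using True by (intro mult_left_mono) auto
    then show ?thesis using z by (simp add: algebra_simps)
  next
    case False
    then show ?thesis using \<open>\<not> t < s\<close> by simp
  qed
qed

lemma ln_abs_div: "(x::real) \<noteq> 0 \<Longrightarrow> y \<noteq> 0 \<Longrightarrow> ln \<bar>x / y\<bar> = ln \<bar>x\<bar> - ln \<bar>y\<bar>"
  by (simp add: abs_divide ln_div)

lemma ln_abs_div2: "(x::real) \<noteq> 0 \<Longrightarrow> y \<noteq> 0 \<Longrightarrow> ln (\<bar>x\<bar> / \<bar>y\<bar>) = ln \<bar>x\<bar> - ln \<bar>y\<bar>"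
  by (simp add: ln_div)

lemma same_sign_aux: "\<bar>(x::real) - l\<bar> < \<bar>l\<bar> \<Longrightarrow> x * l > 0"
  by (cases "l > 0") (auto simp: abs_less_iff zero_less_mult_iff split: abs_split)

definition Pf :: "real \<Rightarrow> (nat \<Rightarrow> real) \<Rightarrow> nat \<Rightarrow> real" where
  "Pf \<beta> w k = - ln \<bar>w (k+1)\<bar> + \<beta> * ln \<bar>w k\<bar> + \<beta> * rfun (w k / w (k+1))"

lemma tele_step:
  fixes w a :: "nat \<Rightarrow> real"
  assumes nz: "\<And>k. w k \<noteq> 0"
    and rec: "\<And>k. k \<ge> 1 \<Longrightarrow> w (k+1) = w k - a k * w k + \<beta> * (w k - w (k-1))"
  shows "a (K+1) + (rfun (w (K+2) / w (K+1)) + \<beta> * rfun (w (K+1) / w (K+2))) = Pf \<beta> w (K+1) - Pf \<beta> w K"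
proof -
  have r: "w (K+2) = w (K+1) - a (K+1) * w (K+1) + \<beta> * (w (K+1) - w K)"
    using rec[of "K+1"] by (simp add: numeral_2_eq_2)
  have e: "a (K+1) + w (K+2) / w (K+1) - 1 = \<beta> * (1 - w K / w (K+1))"
    using nz[of "K+1"] unfolding r by (simp add: field_simps)
  show ?thesis
    unfolding Pf_def rfun_def
    using e nz[of K] nz[of "K+1"] nz[of "K+2"]
    by (simp add: ln_abs_div ln_abs_div2 algebra_simps add.commute[of 1 K] numeral_2_eq_2)
qed

lemma tele_sum:
  fixes w a :: "nat \<Rightarrow> real"
  assumes nz: "\<And>k. w k \<noteq> 0"
    and rec: "\<And>k. k \<ge> 1 \<Longrightarrow> w (k+1) = w k - a k * w k + \<beta> * (w k - w (k-1))"
  shows "(\<Sum>k<K. a (k+1) + (rfun (w (k+2) / w (k+1)) + \<beta> * rfun (w (k+1) / w (k+2)))) = Pf \<beta> w K - Pf \<beta> w 0"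
proof (induction K)
  case 0 then show ?case by simp
next
  case (Suc K)
  then show ?case using tele_step[OF nz rec, of K] by simp
qed

lemma rfun_1: "rfun 1 = 0" by (simp add: rfun_def)

lemma Pf_lim:
  fixes w :: "nat \<Rightarrow> real"
  assumes lim: "w \<longlonglongrightarrow> l" and l: "l \<noteq> 0"
  shows "(\<lambda>K. Pf \<beta> w K) \<longlonglongrightarrow> - (1 - \<beta>) * ln \<bar>l\<bar>"
proof -
  have lim1: "(\<lambda>K. w (K+1)) \<longlonglongrightarrow> l" using lim by (rule LIMSEQ_ignore_initial_segment)
  have "(\<lambda>K. - ln \<bar>w (K+1)\<bar> + \<beta> * ln \<bar>w K\<bar> + \<beta> * ((w K / w (K+1) - 1) - ln \<bar>w K / w (K+1)\<bar>))
     \<longlonglongrightarrow> - ln \<bar>l\<bar> + \<beta> * ln \<bar>l\<bar> + \<beta> * ((l / l - 1) - ln \<bar>l / l\<bar>)"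
    using l by (intro tendsto_intros lim lim1) auto
  then show ?thesis using l by (simp add: Pf_def rfun_def algebra_simps)
qed

lemma ev_same_sign:
  fixes w :: "nat \<Rightarrow> real"
  assumes lim: "w \<longlonglongrightarrow> l" and l: "l \<noteq> 0"
  shows "eventually (\<lambda>k. w k * l > 0) sequentially"
proof -
  have "eventually (\<lambda>k. dist (w k) l < \<bar>l\<bar>) sequentially"
    using lim l by (simp add: tendsto_iff)
  then show ?thesis
    by (rule eventually_mono) (auto simp: dist_real_def intro: same_sign_aux)
qed

lemma ev_Sterm_nonneg:
  fixes w :: "nat \<Rightarrow> real"
  assumes lim: "w \<longlonglongrightarrow> l" and l: "l \<noteq> 0" and b: "\<beta> \<ge> 0"
  shows "eventually (\<lambda>k. rfun (w (k+2) / w (k+1)) + \<beta> * rfun (w (k+1) / w (k+2)) \<ge> 0) sequentially"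
proof -
  have e: "eventually (\<lambda>k. w k * l > 0) sequentially" using ev_same_sign[OF lim l] .
  obtain N where N: "\<And>k. k \<ge> N \<Longrightarrow> w k * l > 0" using e by (auto simp: eventually_sequentially)
  have e1: "eventually (\<lambda>k. w (k+1) * l > 0) sequentially"
    unfolding eventually_sequentially by (rule exI[of _ N]) (auto intro: N)
  have e2: "eventually (\<lambda>k. w (k+2) * l > 0) sequentially"
    unfolding eventually_sequentially by (rule exI[of _ N]) (auto intro: N)
  show ?thesis using e1 e2
  proof eventually_elim
    case (elim k)
    have "w (k+2) / w (k+1) > 0" "w (k+1) / w (k+2) > 0"
      using elim by (auto simp: zero_less_divide_iff zero_less_mult_iff)
    then show ?case using b by (simp add: rfun_nonneg)
  qed
qed

lemma summable_split:
  fixes a b :: "nat \<Rightarrow> real"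
  assumes ea: "eventually (\<lambda>k. a k \<ge> 0) sequentially"
    and eb: "eventually (\<lambda>k. b k \<ge> 0) sequentially"
    and lim: "(\<lambda>K. \<Sum>k<K. a k + b k) \<longlonglongrightarrow> L"
  shows "summable a \<and> summable b"
proof -
  have sab: "summable (\<lambda>k. a k + b k)" using lim unfolding summable_def sums_def by blast
  have "eventually (\<lambda>k. norm (a k) \<le> a k + b k) sequentially"
    using ea eb by eventually_elim auto
  then have sa: "summable a" using sab by (rule summable_comparison_test_ev)
  have "summable (\<lambda>k. (a k + b k) - a k)" using sab sa by (rule summable_diff)
  then show ?thesis using sa by simp
qed

lemma hyp_entropy_eq: "hyp_entropy D = (\<lambda>\<theta>. (1/4) * (\<Sum>i\<in>UNIV. fD (D$i) (\<theta>$i)))"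
  unfolding hyp_entropy_def fD_def by (rule ext) simp

lemma hyp_deriv:
  fixes D b :: "real^'d"
  assumes D: "\<And>i. D$i > 0"
  shows "(hyp_entropy D has_derivative
     (\<lambda>h. (1/4) * (\<Sum>i\<in>UNIV. (2 * arsinh (2 * b$i / D$i)) * h$i))) (at b)"
  unfolding hyp_entropy_eq
proof (intro has_derivative_mult_right has_derivative_sum)
  fix i :: 'd
  have c: "((\<lambda>\<theta>::real^'d. \<theta>$i) has_derivative (\<lambda>h. h$i)) (at b)"
    by (rule bounded_linear_imp_has_derivative[OF bounded_linear_vec_nth])
  have f: "(fD (D$i) has_derivative (\<lambda>h. (2 * arsinh (2 * b$i / D$i)) * h)) (at (b$i))"
    using fD_deriv[OF D[of i], of "b$i"] by (rule has_field_derivative_imp_has_derivative)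
  show "((\<lambda>\<theta>. fD (D$i) (\<theta>$i)) has_derivative (\<lambda>h. (2 * arsinh (2 * b$i / D$i)) * h$i)) (at b)"
    using has_derivative_compose[OF c f] .
qed

lemma bregman_cmp:
  fixes D b s t :: "real^'d"
  assumes D: "\<And>i. D$i > 0"
    and orth: "(\<Sum>i\<in>UNIV. (arsinh (2 * t$i / D$i) - arsinh (2 * b$i / D$i)) * (s$i - t$i)) = 0"
  shows "bregman (hyp_entropy D) t b \<le> bregman (hyp_entropy D) s b"
proof -
  have fd: "frechet_derivative (hyp_entropy D) (at b) =
     (\<lambda>h. (1/4) * (\<Sum>i\<in>UNIV. (2 * arsinh (2 * b$i / D$i)) * h$i))"
    using frechet_derivative_at[OF hyp_deriv[OF D]] by simp
  have key: "(\<Sum>i\<in>UNIV. fD (D$i) (t$i) - (t$i - b$i) * (2 * arsinh (2 * b$i / D$i)))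
      \<le> (\<Sum>i\<in>UNIV. fD (D$i) (s$i) - (s$i - b$i) * (2 * arsinh (2 * b$i / D$i)))"
  proof -
    have "(\<Sum>i\<in>UNIV. fD (D$i) (s$i) - (s$i - b$i) * (2 * arsinh (2 * b$i / D$i)))
        - (\<Sum>i\<in>UNIV. fD (D$i) (t$i) - (t$i - b$i) * (2 * arsinh (2 * b$i / D$i)))
        = (\<Sum>i\<in>UNIV. fD (D$i) (s$i) - fD (D$i) (t$i) - 2 * arsinh (2 * b$i / D$i) * (s$i - t$i))"
      by (simp add: sum_subtractf[symmetric] algebra_simps)
    also have "\<dots> \<ge> (\<Sum>i\<in>UNIV. 2 * ((arsinh (2 * t$i / D$i) - arsinh (2 * b$i / D$i)) * (s$i - t$i)))"
      by (intro sum_mono) (use fD_convex[OF D] in \<open>auto simp: algebra_simps\<close>)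
    also have "(\<Sum>i\<in>UNIV. 2 * ((arsinh (2 * t$i / D$i) - arsinh (2 * b$i / D$i)) * (s$i - t$i))) = 0"
      using orth by (simp add: sum_distrib_left[symmetric])
    finally show ?thesis by simp
  qed
  show ?thesis
    unfolding bregman_def fd
    using key by (simp add: hyp_entropy_eq sum_subtractf sum.distrib right_diff_distrib left_diff_distrib mult.commute)
qed

theorem theorem2:
  fixes n Bsz :: nat
    and x :: "nat \<Rightarrow> real^'d" and y :: "nat \<Rightarrow> real"
    and \<gamma> \<beta> :: real
    and batch :: "nat \<Rightarrow> nat set"
    and u v :: "nat \<Rightarrow> real^'d"
    and u_inf v_inf :: "real^'d"
  assumes Bsz: "1 \<le> Bsz" "Bsz \<le> n"
    and gamma: "\<gamma> > 0"
    and beta: "0 \<le> \<beta>" "\<beta> < 1"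
    and batches: "\<And>k. k \<ge> 1 \<Longrightarrow> batch k \<subseteq> {..<n} \<and> card (batch k) = Bsz"
    and every_point_sampled: "\<And>i. i < n \<Longrightarrow> infinite {k. k \<ge> 1 \<and> i \<in> batch k}"
    and S_nonempty: "interpolators n x y \<noteq> {}"
    and init_u: "u 1 = u 0" and init_v: "v 1 = v 0"
    and rec_u: "\<And>k. k \<ge> 1 \<Longrightarrow> u (k+1) =
        u k - \<gamma> *\<^sub>R hmul (batch_grad x y (batch k) (hmul (u k) (v k))) (v k) + \<beta> *\<^sub>R (u k - u (k-1))"
    and rec_v: "\<And>k. k \<ge> 1 \<Longrightarrow> v (k+1) =
        v k - \<gamma> *\<^sub>R hmul (batch_grad x y (batch k) (hmul (u k) (v k))) (u k) + \<beta> *\<^sub>R (v k - v (k-1))"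
    and conv_u: "u \<longlonglongrightarrow> u_inf" and conv_v: "v \<longlonglongrightarrow> v_inf"
    and Delta_inf_nz: "\<And>i. \<bar>(u_inf$i)^2 - (v_inf$i)^2\<bar> \<noteq> 0"
    and w_nz: "\<And>k i. (u k + v k)$i \<noteq> 0 \<and> (u k - v k)$i \<noteq> 0"
  shows "(let \<theta>_inf = hmul u_inf v_inf;
              wp = (\<lambda>k. u k + v k); wm = (\<lambda>k. u k - v k);
              Sp = S_sum \<beta> wp; Sm = S_sum \<beta> wm;
              \<Delta>_0 = (\<chi> i. \<bar>(u 0$i)^2 - (v 0$i)^2\<bar>);
              \<Delta>_inf = (\<chi> i. \<bar>(u_inf$i)^2 - (v_inf$i)^2\<bar>);
              \<theta>t_0 = (\<chi> i. (1/4) * ((wp 0$i)^2 * exp (-2 * Sp$i) - (wm 0$i)^2 * exp (-2 * Sm$i)))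
          in (\<forall>i. summable (\<lambda>k. S_term \<beta> wp i (k+1)) \<and> summable (\<lambda>k. S_term \<beta> wm i (k+1)))
             \<and> \<Delta>_inf = (\<chi> i. \<Delta>_0$i * exp (- (Sp$i + Sm$i)))
             \<and> \<theta>_inf \<in> interpolators n x y
             \<and> (\<forall>\<theta>s \<in> interpolators n x y.
                  bregman (hyp_entropy \<Delta>_inf) \<theta>_inf \<theta>t_0 \<le> bregman (hyp_entropy \<Delta>_inf) \<theta>s \<theta>t_0))"
proof -
  define g where "g k = batch_grad x y (batch k) (hmul (u k) (v k))" for k
  define wp where "wp = (\<lambda>k. u k + v k)"
  define wm where "wm = (\<lambda>k. u k - v k)"
  define Sp where "Sp = S_sum \<beta> wp"
  define Sm where "Sm = S_sum \<beta> wm"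
  define D0 where "D0 = (\<chi> i. \<bar>(u 0$i)^2 - (v 0$i)^2\<bar>)"
  define Dinf where "Dinf = (\<chi> i. \<bar>(u_inf$i)^2 - (v_inf$i)^2\<bar>)"
  define tt0 where "tt0 = (\<chi> i. (1/4) * ((wp 0$i)^2 * exp (-2 * Sp$i) - (wm 0$i)^2 * exp (-2 * Sm$i)))"
  define tinf where "tinf = hmul u_inf v_inf"
  define wpi where "wpi = u_inf + v_inf"
  define wmi where "wmi = u_inf - v_inf"
  have b1: "1 - \<beta> > 0" using beta by simp
  have uc: "u (k+1) $ i = u k $ i - \<gamma> * (g k $ i * v k $ i) + \<beta> * (u k $ i - u (k-1) $ i)"
    if "k \<ge> 1" for k i
    using rec_u[OF that] by (simp add: g_def hmul_def)
  have vc: "v (k+1) $ i = v k $ i - \<gamma> * (g k $ i * u k $ i) + \<beta> * (v k $ i - v (k-1) $ i)"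
    if "k \<ge> 1" for k i
    using rec_v[OF that] by (simp add: g_def hmul_def)
  have wpm: "(u_inf$i)^2 - (v_inf$i)^2 = wpi$i * wmi$i" for i
    by (simp add: wpi_def wmi_def power2_eq_square algebra_simps)
  have wpi_nz: "wpi $ i \<noteq> 0" and wmi_nz: "wmi $ i \<noteq> 0" for i
    using Delta_inf_nz[of i] unfolding wpm by auto
  have lp: "(\<lambda>k. wp k $ i) \<longlonglongrightarrow> wpi $ i" for i
    unfolding wp_def wpi_def by (intro tendsto_intros conv_u conv_v)
  have lm: "(\<lambda>k. wm k $ i) \<longlonglongrightarrow> wmi $ i" for i
    unfolding wm_def wmi_def by (intro tendsto_intros conv_u conv_v)
  have coord: "summable (\<lambda>k. S_term \<beta> wp i (k+1)) \<and> summable (\<lambda>k. S_term \<beta> wm i (k+1))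
      \<and> Dinf $ i = D0 $ i * exp (- (Sp$i + Sm$i))
      \<and> (\<lambda>K. \<Sum>k<K. \<gamma> * g (k+1) $ i) \<longlonglongrightarrow> - (1 - \<beta>) * (ln \<bar>wpi$i\<bar> - ln \<bar>wp 0$i\<bar> + Sp$i)
      \<and> ln \<bar>wmi$i\<bar> - ln \<bar>wm 0$i\<bar> + Sm$i = - (ln \<bar>wpi$i\<bar> - ln \<bar>wp 0$i\<bar> + Sp$i)" for i
  proof -
    define a where "a k = \<gamma> * g k $ i" for k
    define p where "p k = wp k $ i" for k
    define m where "m k = wm k $ i" for k
    have pnz: "\<And>k. p k \<noteq> 0" and mnz: "\<And>k. m k \<noteq> 0"
      using w_nz by (auto simp: p_def m_def wp_def wm_def)
    have prec: "p (k+1) = p k - a k * p k + \<beta> * (p k - p (k-1))" if "k\<ge>1" for k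
      unfolding p_def a_def wp_def vector_add_component uc[OF that] vc[OF that] by (simp add: algebra_simps)
    have mrec: "m (k+1) = m k - (- a k) * m k + \<beta> * (m k - m (k-1))" if "k\<ge>1" for k
      unfolding m_def a_def wm_def vector_minus_component uc[OF that] vc[OF that] by (simp add: algebra_simps)
    have St: "\<And>w k. S_term \<beta> w i (k+1) = rfun (w (k+2) $ i / w (k+1) $ i) + \<beta> * rfun (w (k+1) $ i / w (k+2) $ i)"
      by (simp add: S_term_def numeral_2_eq_2)
    define Tp where "Tp K = (\<Sum>k<K. S_term \<beta> wp i (k+1))" for K
    define Tm where "Tm K = (\<Sum>k<K. S_term \<beta> wm i (k+1))" for K
    define A where "A K = (\<Sum>k<K. a (k+1))" for K
    have Stp: "S_term \<beta> wp i (k+1) = rfun (p (k+2) / p (k+1)) + \<beta> * rfun (p (k+1) / p (k+2))" for k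
      by (simp add: S_term_def p_def numeral_2_eq_2)
    have Stm: "S_term \<beta> wm i (k+1) = rfun (m (k+2) / m (k+1)) + \<beta> * rfun (m (k+1) / m (k+2))" for k
      by (simp add: S_term_def m_def numeral_2_eq_2)
    have tp: "A K + Tp K = Pf \<beta> p K - Pf \<beta> p 0" for K
    proof -
      have "A K + Tp K = (\<Sum>k<K. a (k+1) + (rfun (p (k+2) / p (k+1)) + \<beta> * rfun (p (k+1) / p (k+2))))"
        by (simp only: A_def Tp_def Stp sum.distrib)
      also have "\<dots> = Pf \<beta> p K - Pf \<beta> p 0" by (rule tele_sum[OF pnz prec])
      finally show ?thesis .
    qed
    have tm: "- A K + Tm K = Pf \<beta> m K - Pf \<beta> m 0" for K
    proof -
      have "- A K + Tm K = (\<Sum>k<K. - a (k+1) + (rfun (m (k+2) / m (k+1)) + \<beta> * rfun (m (k+1) / m (k+2))))"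
        by (simp only: A_def Tm_def Stm sum.distrib sum_negf)
      also have "\<dots> = Pf \<beta> m K - Pf \<beta> m 0" by (rule tele_sum[OF mnz mrec])
      finally show ?thesis .
    qed
    have p1: "p 1 = p 0" and m1: "m 1 = m 0"
      using init_u init_v by (simp_all add: p_def m_def wp_def wm_def)
    have P0p: "Pf \<beta> p 0 = - (1 - \<beta>) * ln \<bar>p 0\<bar>"
      using p1 pnz[of 0] by (simp add: Pf_def rfun_1 algebra_simps)
    have P0m: "Pf \<beta> m 0 = - (1 - \<beta>) * ln \<bar>m 0\<bar>"
      using m1 mnz[of 0] by (simp add: Pf_def rfun_1 algebra_simps)
    have Plp: "(\<lambda>K. Pf \<beta> p K) \<longlonglongrightarrow> - (1 - \<beta>) * ln \<bar>wpi$i\<bar>"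
      using Pf_lim[OF lp[of i, folded p_def[abs_def]] wpi_nz] .
    have Plm: "(\<lambda>K. Pf \<beta> m K) \<longlonglongrightarrow> - (1 - \<beta>) * ln \<bar>wmi$i\<bar>"
      using Pf_lim[OF lm[of i, folded m_def[abs_def]] wmi_nz] .
    define C where "C = (- (1 - \<beta>) * ln \<bar>wpi$i\<bar> - Pf \<beta> p 0) + (- (1 - \<beta>) * ln \<bar>wmi$i\<bar> - Pf \<beta> m 0)"
    have TT: "Tp K + Tm K = (Pf \<beta> p K - Pf \<beta> p 0) + (Pf \<beta> m K - Pf \<beta> m 0)" for K
      using tp[of K] tm[of K] by simp
    have TTlim: "(\<lambda>K. Tp K + Tm K) \<longlonglongrightarrow> C"
      unfolding TT C_def by (intro tendsto_intros Plp Plm)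
    have evp: "eventually (\<lambda>k. S_term \<beta> wp i (k+1) \<ge> 0) sequentially"
      using ev_Sterm_nonneg[OF lp[of i, folded p_def[abs_def]] wpi_nz beta(1)] by (simp only: Stp)
    have evm: "eventually (\<lambda>k. S_term \<beta> wm i (k+1) \<ge> 0) sequentially"
      using ev_Sterm_nonneg[OF lm[of i, folded m_def[abs_def]] wmi_nz beta(1)] by (simp only: Stm)
    have sums: "summable (\<lambda>k. S_term \<beta> wp i (k+1)) \<and> summable (\<lambda>k. S_term \<beta> wm i (k+1))"
      by (rule summable_split[OF evp evm]) (use TTlim in \<open>simp add: Tp_def Tm_def sum.distrib\<close>)
    have Tpl: "Tp \<longlonglongrightarrow> (1 - \<beta>) * Sp$i"
      using summable_LIMSEQ[OF sums[THEN conjunct1]] b1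
      by (simp add: Tp_def[abs_def] Sp_def S_sum_def)
    have Tml: "Tm \<longlonglongrightarrow> (1 - \<beta>) * Sm$i"
      using summable_LIMSEQ[OF sums[THEN conjunct2]] b1
      by (simp add: Tm_def[abs_def] Sm_def S_sum_def)
    have "(\<lambda>K. Tp K + Tm K) \<longlonglongrightarrow> (1 - \<beta>) * Sp$i + (1 - \<beta>) * Sm$i"
      using Tpl Tml by (rule tendsto_add)
    then have Ceq: "C = (1 - \<beta>) * Sp$i + (1 - \<beta>) * Sm$i"
      using TTlim LIMSEQ_unique by blast
    have Ceq2: "Sp$i + Sm$i = ln \<bar>p 0\<bar> + ln \<bar>m 0\<bar> - ln \<bar>wpi$i\<bar> - ln \<bar>wmi$i\<bar>"
    proof -
      have "(1 - \<beta>) * (Sp$i + Sm$i) = (1 - \<beta>) * (ln \<bar>p 0\<bar> + ln \<bar>m 0\<bar> - ln \<bar>wpi$i\<bar> - ln \<bar>wmi$i\<bar>)"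
        using Ceq by (simp add: C_def P0p P0m algebra_simps)
      then show ?thesis using b1 by simp
    qed
    have Aeq: "A K = (Pf \<beta> p K - Pf \<beta> p 0) - Tp K" for K using tp[of K] by simp
    have Al: "A \<longlonglongrightarrow> (- (1 - \<beta>) * ln \<bar>wpi$i\<bar> - Pf \<beta> p 0) - (1 - \<beta>) * Sp$i"
      unfolding Aeq[abs_def] by (intro tendsto_intros Plp Tpl)
    have Al2: "A \<longlonglongrightarrow> - (1 - \<beta>) * (ln \<bar>wpi$i\<bar> - ln \<bar>wp 0$i\<bar> + Sp$i)"
      using Al by (simp add: P0p p_def algebra_simps)
    have D: "Dinf $ i = D0 $ i * exp (- (Sp$i + Sm$i))"
    proof -
      have "Dinf $ i = \<bar>wpi$i\<bar> * \<bar>wmi$i\<bar>"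
        by (simp add: Dinf_def wpi_def wmi_def abs_mult[symmetric] power2_eq_square algebra_simps)
      also have "\<dots> = exp (ln \<bar>wpi$i\<bar> + ln \<bar>wmi$i\<bar>)"
        using wpi_nz[of i] wmi_nz[of i] by (simp add: exp_add)
      also have "\<dots> = exp (ln \<bar>p 0\<bar> + ln \<bar>m 0\<bar>) * exp (- (Sp$i + Sm$i))"
        unfolding Ceq2 by (simp add: exp_add[symmetric])
      also have "\<dots> = \<bar>p 0\<bar> * \<bar>m 0\<bar> * exp (- (Sp$i + Sm$i))"
        using pnz[of 0] mnz[of 0] by (simp add: exp_add)
      also have "\<bar>p 0\<bar> * \<bar>m 0\<bar> = D0 $ i"
        by (simp add: D0_def p_def m_def wp_def wm_def abs_mult[symmetric] power2_eq_square algebra_simps)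
      finally show ?thesis .
    qed
    show ?thesis
      using sums D Al2[unfolded A_def[abs_def] a_def] Ceq2 by (simp add: p_def m_def algebra_simps)
  qed
  have th_lim: "(\<lambda>k. hmul (u k) (v k)) \<longlonglongrightarrow> tinf"
    unfolding tinf_def hmul_def by (intro vec_tendstoI) (simp, intro tendsto_intros conv_u conv_v)
  have g_lim: "g \<longlonglongrightarrow> 0"
  proof (rule vec_tendstoI)
    fix i
    have e: "\<gamma> * g (k+1) $ i = ((u (k+1) $ i - u (k+2) $ i + \<beta> * (u (k+1) $ i - u k $ i))
        + (v (k+1) $ i - v (k+2) $ i + \<beta> * (v (k+1) $ i - v k $ i))) / wp (k+1) $ i" for k
    proof -
      have 1: "u (k+2) $ i = u (k+1) $ i - \<gamma> * (g (k+1) $ i * v (k+1) $ i) + \<beta> * (u (k+1) $ i - u k $ i)"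
        using uc[of "k+1" i] by (simp add: numeral_2_eq_2)
      have 2: "v (k+2) $ i = v (k+1) $ i - \<gamma> * (g (k+1) $ i * u (k+1) $ i) + \<beta> * (v (k+1) $ i - v k $ i)"
        using vc[of "k+1" i] by (simp add: numeral_2_eq_2)
      have 3: "wp (k+1) $ i \<noteq> 0" using w_nz by (simp add: wp_def)
      show ?thesis unfolding 1 2 using 3 by (simp add: wp_def field_simps)
    qed
    have u0: "(\<lambda>k. u k $ i) \<longlonglongrightarrow> u_inf $ i" by (intro tendsto_intros conv_u)
    have u1: "(\<lambda>k. u (k+1) $ i) \<longlonglongrightarrow> u_inf $ i"
      by (intro tendsto_vec_nth LIMSEQ_ignore_initial_segment conv_u)
    have u2: "(\<lambda>k. u (k+2) $ i) \<longlonglongrightarrow> u_inf $ i"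
      by (intro tendsto_vec_nth LIMSEQ_ignore_initial_segment conv_u)
    have v0: "(\<lambda>k. v k $ i) \<longlonglongrightarrow> v_inf $ i" by (intro tendsto_intros conv_v)
    have v1: "(\<lambda>k. v (k+1) $ i) \<longlonglongrightarrow> v_inf $ i"
      by (intro tendsto_vec_nth LIMSEQ_ignore_initial_segment conv_v)
    have v2: "(\<lambda>k. v (k+2) $ i) \<longlonglongrightarrow> v_inf $ i"
      by (intro tendsto_vec_nth LIMSEQ_ignore_initial_segment conv_v)
    have w1: "(\<lambda>k. wp (k+1) $ i) \<longlonglongrightarrow> wpi $ i"
      using LIMSEQ_ignore_initial_segment[OF lp[of i], of 1] by simp
    have "(\<lambda>k. ((u (k+1) $ i - u (k+2) $ i + \<beta> * (u (k+1) $ i - u k $ i))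
        + (v (k+1) $ i - v (k+2) $ i + \<beta> * (v (k+1) $ i - v k $ i))) / wp (k+1) $ i)
        \<longlonglongrightarrow> ((u_inf $ i - u_inf $ i + \<beta> * (u_inf $ i - u_inf $ i))
        + (v_inf $ i - v_inf $ i + \<beta> * (v_inf $ i - v_inf $ i))) / wpi $ i"
      by (rule tendsto_divide[OF tendsto_add[OF tendsto_add[OF tendsto_diff[OF u1 u2] tendsto_mult[OF tendsto_const tendsto_diff[OF u1 u0]]]
           tendsto_add[OF tendsto_diff[OF v1 v2] tendsto_mult[OF tendsto_const tendsto_diff[OF v1 v0]]]] w1 wpi_nz])
    then have "(\<lambda>k. \<gamma> * g (k+1) $ i) \<longlonglongrightarrow> 0" unfolding e by simp
    then have "(\<lambda>k. (\<gamma> * g (k+1) $ i) / \<gamma>) \<longlonglongrightarrow> 0 / \<gamma>"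
      by (rule tendsto_divide) (use gamma in auto)
    then have "(\<lambda>k. g (k+1) $ i) \<longlonglongrightarrow> 0" using gamma by simp
    then show "(\<lambda>k. g k $ i) \<longlonglongrightarrow> 0 $ i" by (simp add: LIMSEQ_offset[of _ 1])
  qed
  have ek: "inner (g k) (hmul (u k) (v k) - ts)
      = (1 / real Bsz) * (\<Sum>j\<in>batch k. (y j - inner (x j) (hmul (u k) (v k)))^2)"
    if k1: "k \<ge> 1" and ts: "ts \<in> interpolators n x y" for k ts
  proof -
    have bk: "batch k \<subseteq> {..<n}" "card (batch k) = Bsz" using batches[OF k1] by auto
    have ij: "inner (x j) (hmul (u k) (v k) - ts) = - (y j - inner (x j) (hmul (u k) (v k)))"
      if "j \<in> batch k" for j
    proof -
      have "inner ts (x j) = y j" using ts bk(1) that by (auto simp: interpolators_def)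
      then show ?thesis by (simp add: inner_diff_right inner_commute)
    qed
    have "inner (g k) (hmul (u k) (v k) - ts) = - (1 / real Bsz) *
        (\<Sum>j\<in>batch k. (y j - inner (x j) (hmul (u k) (v k))) * inner (x j) (hmul (u k) (v k) - ts))"
      by (simp add: g_def batch_grad_def inner_sum_left bk(2))
    also have "\<dots> = - (1 / real Bsz) * (\<Sum>j\<in>batch k. - ((y j - inner (x j) (hmul (u k) (v k)))^2))"
      by (intro arg_cong[where f="\<lambda>z. - (1 / real Bsz) * z"] sum.cong refl) (subst ij, assumption, simp add: power2_eq_square right_diff_distrib)
    also have "\<dots> = (1 / real Bsz) * (\<Sum>j\<in>batch k. (y j - inner (x j) (hmul (u k) (v k)))^2)"
      by (simp add: sum_negf)
    finally show ?thesis .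
  qed
  have orth_g: "inner (g k) (ts - tinf) = 0"
    if k1: "k \<ge> 1" and ts: "ts \<in> interpolators n x y" and ti: "tinf \<in> interpolators n x y" for k ts
  proof -
    have bk: "batch k \<subseteq> {..<n}" using batches[OF k1] by auto
    have "inner (x j) (ts - tinf) = 0" if "j \<in> batch k" for j
    proof -
      have "inner ts (x j) = y j" "inner tinf (x j) = y j" using ts ti bk that by (auto simp: interpolators_def)
      then show ?thesis by (simp add: inner_diff_right inner_commute)
    qed
    then show ?thesis by (simp add: g_def batch_grad_def inner_sum_left)
  qed
  obtain ts0 where ts0: "ts0 \<in> interpolators n x y" using S_nonempty by blast
  have interp: "tinf \<in> interpolators n x y"
    unfolding interpolators_def
  proof (intro CollectI allI impI)
    fix j assume jn: "j < n"
    show "inner tinf (x j) = y j"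
    proof (rule ccontr)
      assume ne: "inner tinf (x j) \<noteq> y j"
      define \<rho> where "\<rho> = y j - inner (x j) tinf"
      have rho: "\<rho>^2 > 0" using ne by (simp add: \<rho>_def inner_commute)
      have Bp: "real Bsz > 0" using Bsz by simp
      have el: "(\<lambda>k. inner (g k) (hmul (u k) (v k) - ts0)) \<longlonglongrightarrow> inner 0 (tinf - ts0)"
        by (intro tendsto_intros g_lim th_lim)
      have "eventually (\<lambda>k. inner (g k) (hmul (u k) (v k) - ts0) < \<rho>^2 / (2 * real Bsz)) sequentially"
        using el rho Bp by (intro order_tendstoD(2)) auto
      moreover have rl: "(\<lambda>k. (y j - inner (x j) (hmul (u k) (v k)))^2) \<longlonglongrightarrow> \<rho>^2"
        unfolding \<rho>_def by (intro tendsto_intros th_lim)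
      have "eventually (\<lambda>k. (y j - inner (x j) (hmul (u k) (v k)))^2 > \<rho>^2 / 2) sequentially"
        using rl rho by (intro order_tendstoD(1)) auto
      ultimately have "eventually (\<lambda>k. inner (g k) (hmul (u k) (v k) - ts0) < \<rho>^2 / (2 * real Bsz)
          \<and> (y j - inner (x j) (hmul (u k) (v k)))^2 > \<rho>^2 / 2) sequentially"
        by eventually_elim auto
      then obtain N where N: "\<And>k. k \<ge> N \<Longrightarrow> inner (g k) (hmul (u k) (v k) - ts0) < \<rho>^2 / (2 * real Bsz)
          \<and> (y j - inner (x j) (hmul (u k) (v k)))^2 > \<rho>^2 / 2"
        by (auto simp: eventually_sequentially)
      obtain k where k: "k \<ge> max N 1" "k \<in> {k. k \<ge> 1 \<and> j \<in> batch k}"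
        using every_point_sampled[OF jn] unfolding infinite_nat_iff_unbounded_le by blast
      have k1: "k \<ge> 1" and jk: "j \<in> batch k" using k by auto
      have fin: "finite (batch k)" using batches[OF k1] finite_subset by blast
      have "(y j - inner (x j) (hmul (u k) (v k)))^2 \<le> (\<Sum>j\<in>batch k. (y j - inner (x j) (hmul (u k) (v k)))^2)"
        by (rule member_le_sum[OF jk _ fin]) simp
      then have "(1 / real Bsz) * (y j - inner (x j) (hmul (u k) (v k)))^2 \<le> inner (g k) (hmul (u k) (v k) - ts0)"
        unfolding ek[OF k1 ts0] using Bp by (intro mult_left_mono) auto
      moreover have "(y j - inner (x j) (hmul (u k) (v k)))^2 > \<rho>^2 / 2"
        "inner (g k) (hmul (u k) (v k) - ts0) < \<rho>^2 / (2 * real Bsz)" using N k by auto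
      ultimately show False using Bp by (simp add: field_simps)
    qed
  qed
  define E where "E i = ln \<bar>wpi$i\<bar> - ln \<bar>wp 0$i\<bar> + Sp$i" for i
  have Dpos: "Dinf $ i > 0" for i using Delta_inf_nz[of i] by (simp add: Dinf_def)
  have coef: "arsinh (2 * tinf$i / Dinf$i) - arsinh (2 * tt0$i / Dinf$i) = 2 * E i" for i
  proof -
    have nz: "wp 0 $ i \<noteq> 0" "wm 0 $ i \<noteq> 0" using w_nz by (auto simp: wp_def wm_def)
    have Di: "Dinf $ i = \<bar>wpi$i\<bar> * \<bar>wmi$i\<bar>"
      by (simp add: Dinf_def wpi_def wmi_def abs_mult[symmetric] power2_eq_square algebra_simps)
    have "2 * tinf$i / Dinf$i = (\<bar>wpi$i\<bar>^2 - \<bar>wmi$i\<bar>^2) / (2 * \<bar>wpi$i\<bar> * \<bar>wmi$i\<bar>)"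
      unfolding Di by (simp add: tinf_def hmul_def wpi_def wmi_def power2_eq_square field_simps)
    then have a1: "arsinh (2 * tinf$i / Dinf$i) = ln \<bar>wpi$i\<bar> - ln \<bar>wmi$i\<bar>"
      using arsinh_ratio[of "\<bar>wpi$i\<bar>" "\<bar>wmi$i\<bar>"] wpi_nz[of i] wmi_nz[of i] by simp
    define PA where "PA = \<bar>wp 0$i\<bar> * exp (- Sp$i)"
    define PB where "PB = \<bar>wm 0$i\<bar> * exp (- Sm$i)"
    have PA: "PA > 0" and PB: "PB > 0" using nz by (auto simp: PA_def PB_def)
    have D0i: "D0 $ i = \<bar>wp 0$i\<bar> * \<bar>wm 0$i\<bar>"
      by (simp add: D0_def wp_def wm_def abs_mult[symmetric] power2_eq_square algebra_simps)
    have Di2: "Dinf $ i = PA * PB"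
      using coord[of i] unfolding D0i PA_def PB_def by (simp add: exp_add[symmetric] algebra_simps)
    have ex2: "exp (-2 * s) = exp (- s) * exp (- s)" for s :: real
      by (simp add: exp_add[symmetric])
    have sq: "(\<bar>w\<bar> * exp (- S))^2 = w^2 * exp (-2 * S)" for w S :: real
    proof -
      have "exp (- S) * exp (- S) = exp (-2 * S)" by (subst exp_add[symmetric]) simp
      then show ?thesis by (simp add: power_mult_distrib power2_abs power2_eq_square[of "exp (- S)"])
    qed
    have tt: "2 * tt0$i = (PA^2 - PB^2) / 2"
      unfolding PA_def PB_def sq by (simp add: tt0_def)
    have "2 * tt0$i / Dinf$i = (PA^2 - PB^2) / (2 * PA * PB)"
      unfolding Di2 tt by simp
    then have a2: "arsinh (2 * tt0$i / Dinf$i) = ln PA - ln PB"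
      using arsinh_ratio[OF PA PB] by simp
    have lPA: "ln PA = ln \<bar>wp 0$i\<bar> - Sp$i" using nz by (simp add: PA_def ln_mult)
    have lPB: "ln PB = ln \<bar>wm 0$i\<bar> - Sm$i" using nz by (simp add: PB_def ln_mult)
    show ?thesis using coord[of i] unfolding a1 a2 lPA lPB E_def by (simp add: wp_def wm_def algebra_simps)
  qed
  have breg: "bregman (hyp_entropy Dinf) tinf tt0 \<le> bregman (hyp_entropy Dinf) ts tt0"
    if ts: "ts \<in> interpolators n x y" for ts
  proof -
    define d where "d = ts - tinf"
    have zero: "(\<Sum>i\<in>UNIV. (\<Sum>k<K. \<gamma> * g (k+1) $ i) * d $ i) = 0" for K
    proof -
      have "(\<Sum>i\<in>UNIV. (\<Sum>k<K. \<gamma> * g (k+1) $ i) * d $ i) = (\<Sum>k<K. \<gamma> * inner (g (k+1)) d)"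
        by (simp add: inner_vec_def sum_distrib_right sum_distrib_left sum.swap[of _ UNIV] mult.assoc)
      also have "\<dots> = 0" using orth_g[OF _ ts interp] by (simp add: d_def)
      finally show ?thesis .
    qed
    have "(\<lambda>K. \<Sum>i\<in>UNIV. (\<Sum>k<K. \<gamma> * g (k+1) $ i) * d $ i)
        \<longlonglongrightarrow> (\<Sum>i\<in>UNIV. (- (1 - \<beta>) * E i) * d $ i)"
      using coord by (intro tendsto_sum tendsto_mult_right) (simp add: E_def)
    then have "(\<Sum>i\<in>UNIV. (- (1 - \<beta>) * E i) * d $ i) = 0"
      unfolding zero by (simp add: LIMSEQ_const_iff)
    then have "- (1 - \<beta>) * (\<Sum>i\<in>UNIV. E i * d $ i) = 0"
      by (simp add: sum_distrib_left mult.assoc)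
    then have Ez: "(\<Sum>i\<in>UNIV. E i * d $ i) = 0" using b1 by simp
    show ?thesis
    proof (rule bregman_cmp[OF Dpos])
      show "(\<Sum>i\<in>UNIV. (arsinh (2 * tinf$i / Dinf$i) - arsinh (2 * tt0$i / Dinf$i)) * (ts$i - tinf$i)) = 0"
        using Ez by (simp add: coef d_def sum_distrib_left[symmetric] mult.assoc)
    qed
  qed
  have final: "(\<forall>i. summable (\<lambda>k. S_term \<beta> wp i (k+1)) \<and> summable (\<lambda>k. S_term \<beta> wm i (k+1)))
      \<and> Dinf = (\<chi> i. D0$i * exp (- (Sp$i + Sm$i)))
      \<and> tinf \<in> interpolators n x y
      \<and> (\<forall>ts \<in> interpolators n x y. bregman (hyp_entropy Dinf) tinf tt0 \<le> bregman (hyp_entropy Dinf) ts tt0)"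
    using coord interp breg by (auto simp: vec_eq_iff)
  show ?thesis
    using final unfolding Let_def wp_def wm_def Sp_def Sm_def D0_def Dinf_def tt0_def tinf_def .
qed

end
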